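(* Let $F=(C_1,\dots,C_m)$ be a flag of almost affine codes of length $n$ over a finite alphabet $A$, and let $r_i$ be the rank function of the matroid associated to $C_i$. Then $(E,\rho_F)$, where $E=\{1,\dots,n\}$ and $\rho_F(X)=\sum_{i=1}^m(-1)^{i+1}r_i(X)$, is a demi-matroid.
   Context: An almost affine code over a finite alphabet $A$ of length $n$ and dimension $k$ is a subset $C\subseteq A^n$ with $|C|=|A|^k$ such that for every $X\subseteq E=\{1,\dots,n\}$, $\log_{|A|}|C_X|$ is a nonnegative integer, where $C_X$ is the projection of $C$ onto the coordinates in $X$; its associated matroid has rank function $r(X)=\log_{|A|}|C_X|$. An almost affine subcode of $C$ is a subset of $C$ that is itself an almost affine code over the same alphabet. A flag of almost affine codes is a sequence $(C_1,\dots,C_m)$ of almost affine codes over the same alphabet and of the same length such that $C_{j+1}$ is an almost affine subcode of $C_j$ for $1\le j\le m-1$. A demi-matroid is a pair $(E,r)$ with $r:2^E\to\mathbb{N}$ satisfying $r(\emptyset)=0$ and $r(X)\le r(X\cup\{x\})\le r(X)+1$ for all $X\subseteq E$, $x\in E$. *)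

theory Defs
  imports Complex_Main "HOL-Library.FuncSet"
begin

definition words :: "'a set \<Rightarrow> nat \<Rightarrow> (nat \<Rightarrow> 'a) set" where
  "words A n = PiE {1..n} (\<lambda>_. A)"

definition proj :: "(nat \<Rightarrow> 'a) set \<Rightarrow> nat set \<Rightarrow> (nat \<Rightarrow> 'a) set" where
  "proj C X = (\<lambda>c. restrict c X) ` C"

definition code_rank :: "'a set \<Rightarrow> (nat \<Rightarrow> 'a) set \<Rightarrow> nat set \<Rightarrow> nat" where
  "code_rank A C X = nat \<lfloor>log (real (card A)) (real (card (proj C X)))\<rfloor>"

definition almost_affine_code :: "'a set \<Rightarrow> nat \<Rightarrow> nat \<Rightarrow> (nat \<Rightarrow> 'a) set \<Rightarrow> bool" where
  "almost_affine_code A n k C \<longleftrightarrow>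
     finite A \<and> C \<subseteq> words A n \<and> card C = card A ^ k \<and>
     (\<forall>X \<subseteq> {1..n}. log (real (card A)) (real (card (proj C X))) \<in> \<nat>)"

definition is_almost_affine :: "'a set \<Rightarrow> nat \<Rightarrow> (nat \<Rightarrow> 'a) set \<Rightarrow> bool" where
  "is_almost_affine A n C \<longleftrightarrow> (\<exists>k. almost_affine_code A n k C)"

definition is_flag :: "'a set \<Rightarrow> nat \<Rightarrow> nat \<Rightarrow> (nat \<Rightarrow> (nat \<Rightarrow> 'a) set) \<Rightarrow> bool" where
  "is_flag A n m Cs \<longleftrightarrow>
     (\<forall>i \<in> {1..m}. is_almost_affine A n (Cs i)) \<and>
     (\<forall>j \<in> {1..<m}. Cs (Suc j) \<subseteq> Cs j)"

definition flag_rho :: "'a set \<Rightarrow> nat \<Rightarrow> (nat \<Rightarrow> (nat \<Rightarrow> 'a) set) \<Rightarrow> nat set \<Rightarrow> int" where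
  "flag_rho A m Cs X = (\<Sum>i = 1..m. (-1) ^ (i + 1) * int (code_rank A (Cs i) X))"

text \<open>Demi-matroid (E, r) with r : 2^E \<rightarrow> \<nat>; r is given as an int-valued function,
so nonnegativity on subsets of E is part of the definition.\<close>
definition demi_matroid :: "'e set \<Rightarrow> ('e set \<Rightarrow> int) \<Rightarrow> bool" where
  "demi_matroid E r \<longleftrightarrow>
     (\<forall>X \<subseteq> E. 0 \<le> r X) \<and> r {} = 0 \<and>
     (\<forall>X \<subseteq> E. \<forall>x \<in> E. r X \<le> r (insert x X) \<and> r (insert x X) \<le> r X + 1)"

end

theory Submission
  imports Defs
begin

lemma alt_sum_bounds:
  fixes f :: "nat \<Rightarrow> int"
  assumes "\<And>i. 1 \<le> i \<Longrightarrow> Suc i \<le> m \<Longrightarrow> f (Suc i) \<le> f i"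
    and "\<And>i. i \<in> {1..m} \<Longrightarrow> 0 \<le> f i"
  shows "0 \<le> (\<Sum>i = 1..m. (-1) ^ (i + 1) * f i) \<and>
         (\<Sum>i = 1..m. (-1) ^ (i + 1) * f i) \<le> max 0 (f 1)"
  using assms
proof (induction m arbitrary: f)
  case 0
  then show ?case by simp
next
  case (Suc m)
  have split: "(\<Sum>i = 1..Suc m. (-1) ^ (i + 1) * f i)
      = f 1 - (\<Sum>i = 1..m. (-1) ^ (i + 1) * (f \<circ> Suc) i)"
  proof -
    have "(\<Sum>i = 1..Suc m. (-1) ^ (i + 1) * f i)
        = (-1) ^ (1 + 1) * f 1 + (\<Sum>i = Suc 1..Suc m. (-1) ^ (i + 1) * f i)"
      by (subst sum.atLeast_Suc_atMost) auto
    also have "(\<Sum>i = Suc 1..Suc m. (-1) ^ (i + 1) * f i)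
        = (\<Sum>i = 1..m. (-1) ^ (Suc i + 1) * f (Suc i))"
      by (rule sum.shift_bounds_cl_Suc_ivl)
    also have "\<dots> = - (\<Sum>i = 1..m. (-1) ^ (i + 1) * (f \<circ> Suc) i)"
      by (simp add: sum_negf[symmetric])
    finally show ?thesis by simp
  qed
  have IH: "0 \<le> (\<Sum>i = 1..m. (-1) ^ (i + 1) * (f \<circ> Suc) i) \<and>
         (\<Sum>i = 1..m. (-1) ^ (i + 1) * (f \<circ> Suc) i) \<le> max 0 ((f \<circ> Suc) 1)"
    apply (rule Suc.IH)
    using Suc.prems by auto
  have f1: "0 \<le> f 1" using Suc.prems(2) by auto
  show ?case
  proof (cases "m = 0")
    case True
    then show ?thesis using split f1 by simp
  next
    case False
    have "f 2 \<le> f 1" using Suc.prems(1)[of 1] False by (simp add: numeral_2_eq_2)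
    moreover have "0 \<le> f 2" using Suc.prems(2)[of 2] False by auto
    ultimately show ?thesis using split IH f1 by (simp add: numeral_2_eq_2)
  qed
qed

lemma rank_pow:
  assumes "is_almost_affine A n C" "finite A" "card A \<ge> 2" "X \<subseteq> {1..n}"
  shows "card (proj C X) = card A ^ code_rank A C X"
proof -
  obtain k where k: "almost_affine_code A n k C"
    using assms(1) unfolding is_almost_affine_def by blast
  have sub: "C \<subseteq> words A n" using k unfolding almost_affine_code_def by blast
  have finC: "finite C"
    using sub assms(2) unfolding words_def by (meson finite_PiE finite_atLeastAtMost finite_subset)
  have "card C = card A ^ k" using k unfolding almost_affine_code_def by blast
  hence "card C > 0" using assms(3) by simp
  hence "C \<noteq> {}" by auto
  hence ne: "proj C X \<noteq> {}" unfolding proj_def by auto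
  have fp: "finite (proj C X)" unfolding proj_def using finC by simp
  have pos: "real (card (proj C X)) > 0" using ne fp by (simp add: card_gt_0_iff)
  have "log (real (card A)) (real (card (proj C X))) \<in> \<nat>"
    using k assms(4) unfolding almost_affine_code_def by blast
  then obtain j where j: "log (real (card A)) (real (card (proj C X))) = real j"
    by (auto elim: Nats_cases)
  have b: "real (card A) > 1" using assms(3) by simp
  have "real (card (proj C X)) = real (card A) powr (real j)"
    using j pos b by (metis powr_log_cancel less_trans zero_less_one less_irrefl)
  also have "\<dots> = real (card A) ^ j" using b by (simp add: powr_realpow)
  finally have "card (proj C X) = card A ^ j" by (metis of_nat_eq_iff of_nat_power)
  moreover have "code_rank A C X = j" unfolding code_rank_def j by simp
  ultimately show ?thesis by simp
qed

lemma proj_insert_le: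
  assumes "finite A" "C \<subseteq> words A n" "x \<in> {1..n}" "finite C"
  shows "card (proj C (insert x X)) \<le> card (proj C X) * card A"
proof -
  have "proj C (insert x X) \<subseteq> (\<lambda>(f,a). f(x := a)) ` (proj C X \<times> A)"
  proof
    fix g assume "g \<in> proj C (insert x X)"
    then obtain c where c: "c \<in> C" "g = restrict c (insert x X)" unfolding proj_def by auto
    have "c x \<in> A" using c(1) assms(2,3) unfolding words_def by (auto simp: PiE_iff)
    moreover have "g = (restrict c X)(x := c x)" using c(2) by (auto simp: restrict_def)
    moreover have "restrict c X \<in> proj C X" using c(1) unfolding proj_def by auto
    ultimately show "g \<in> (\<lambda>(f,a). f(x := a)) ` (proj C X \<times> A)" by force
  qed
  moreover have "finite (proj C X)" unfolding proj_def using assms(4) by simp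
  ultimately have "card (proj C (insert x X)) \<le> card ((\<lambda>(f,a). f(x := a)) ` (proj C X \<times> A))"
    using assms(1) by (intro card_mono) auto
  also have "\<dots> \<le> card (proj C X \<times> A)" by (rule card_image_le) (use assms(1) \<open>finite (proj C X)\<close> in auto)
  also have "\<dots> = card (proj C X) * card A" by (simp add: card_cartesian_product)
  finally show ?thesis .
qed

lemma proj_restrict: "proj C X = (\<lambda>f. restrict f X) ` proj C (insert x X)"
  unfolding proj_def image_image by (auto simp: restrict_def fun_eq_iff intro!: image_cong)

lemma proj_insert_ge:
  assumes "finite C"
  shows "card (proj C X) \<le> card (proj C (insert x X))"
  by (subst proj_restrict[of C X x]) (rule card_image_le, simp add: proj_def assms)

lemma proj_mono: "D \<subseteq> C \<Longrightarrow> finite C \<Longrightarrow> card (proj D X) \<le> card (proj C X)"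
  unfolding proj_def by (intro card_mono) auto

lemma proj_inj_transfer:
  assumes "D \<subseteq> C" "finite C" "card (proj C (insert x X)) = card (proj C X)"
  shows "card (proj D (insert x X)) = card (proj D X)"
proof -
  let ?r = "\<lambda>f. restrict f X"
  have fC: "finite (proj C (insert x X))" unfolding proj_def using assms(2) by simp
  have "card (?r ` proj C (insert x X)) = card (proj C (insert x X))"
    using assms(3) proj_restrict[of C X x] by simp
  hence inj: "inj_on ?r (proj C (insert x X))" using fC by (simp add: inj_on_iff_eq_card)
  have "proj D (insert x X) \<subseteq> proj C (insert x X)" using assms(1) unfolding proj_def by auto
  hence "inj_on ?r (proj D (insert x X))" using inj inj_on_subset by blast
  hence "card (?r ` proj D (insert x X)) = card (proj D (insert x X))" by (rule card_image)
  thus ?thesis using proj_restrict[of D X x] by simp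
qed

lemma pow_le_exp: "(b::nat) \<ge> 2 \<Longrightarrow> b ^ i \<le> b ^ j \<Longrightarrow> i \<le> j"
  by (simp add: power_increasing_iff)

lemma aa_facts:
  assumes "is_almost_affine A n C" "finite A"
  shows "C \<subseteq> words A n" "finite C"
proof -
  obtain k where k: "almost_affine_code A n k C"
    using assms(1) unfolding is_almost_affine_def by blast
  show sub: "C \<subseteq> words A n" using k unfolding almost_affine_code_def by blast
  show "finite C"
    using sub assms(2) unfolding words_def by (meson finite_PiE finite_atLeastAtMost finite_subset)
qed

theorem mainTheorem5:
  fixes A :: "'a set" and n m :: nat and Cs :: "nat \<Rightarrow> (nat \<Rightarrow> 'a) set"
  assumes "finite A" and "card A \<ge> 2"
    and "is_flag A n m Cs"
  shows "demi_matroid {1..n} (flag_rho A m Cs)"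
proof -
  have aa: "\<And>i. i \<in> {1..m} \<Longrightarrow> is_almost_affine A n (Cs i)"
    using assms(3) unfolding is_flag_def by blast
  have sub: "\<And>j. 1 \<le> j \<Longrightarrow> Suc j \<le> m \<Longrightarrow> Cs (Suc j) \<subseteq> Cs j"
    using assms(3) unfolding is_flag_def by auto
  define r where "r i X = code_rank A (Cs i) X" for i X
  have pw: "card (proj (Cs i) X) = card A ^ r i X" if "i \<in> {1..m}" "X \<subseteq> {1..n}" for i X
    using rank_pow[OF aa[OF that(1)] assms(1,2) that(2)] r_def by simp
  have fin: "finite (Cs i)" "Cs i \<subseteq> words A n" if "i \<in> {1..m}" for i
    using aa_facts[OF aa[OF that] assms(1)] by auto
  have rho: "flag_rho A m Cs X = (\<Sum>i = 1..m. (-1) ^ (i + 1) * int (r i X))" for X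
    unfolding flag_rho_def r_def by simp
  have rmono: "r (Suc i) X \<le> r i X" if "1 \<le> i" "Suc i \<le> m" "X \<subseteq> {1..n}" for i X
  proof -
    have "card (proj (Cs (Suc i)) X) \<le> card (proj (Cs i) X)"
      using proj_mono[OF sub[OF that(1,2)] fin(1)[of i]] that by auto
    hence "card A ^ r (Suc i) X \<le> card A ^ r i X" using pw that by simp
    thus ?thesis using pow_le_exp[OF assms(2)] by blast
  qed
  have incr: "r i X \<le> r i (insert x X) \<and> r i (insert x X) \<le> r i X + 1"
    if "i \<in> {1..m}" "X \<subseteq> {1..n}" "x \<in> {1..n}" for i X x
  proof -
    have X': "insert x X \<subseteq> {1..n}" using that by auto
    have "card A ^ r i X \<le> card A ^ r i (insert x X)"
      using proj_insert_ge[OF fin(1)[OF that(1)], of X x] pw[OF that(1) that(2)] pw[OF that(1) X'] by simp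
    moreover have "card A ^ r i (insert x X) \<le> card A ^ (r i X + 1)"
      using proj_insert_le[OF assms(1) fin(2)[OF that(1)] that(3) fin(1)[OF that(1)], of X]
        pw[OF that(1) that(2)] pw[OF that(1) X'] by (simp add: mult.commute)
    ultimately show ?thesis using pow_le_exp[OF assms(2)] by blast
  qed
  have dmono: "int (r (Suc i) (insert x X)) - int (r (Suc i) X) \<le> int (r i (insert x X)) - int (r i X)"
    if "1 \<le> i" "Suc i \<le> m" "X \<subseteq> {1..n}" "x \<in> {1..n}" for i X x
  proof -
    have i1: "i \<in> {1..m}" "Suc i \<in> {1..m}" using that by auto
    have X': "insert x X \<subseteq> {1..n}" using that by auto
    show ?thesis
    proof (cases "r i (insert x X) = r i X")
      case True
      hence "card (proj (Cs i) (insert x X)) = card (proj (Cs i) X)"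
        using pw[OF i1(1) that(3)] pw[OF i1(1) X'] by simp
      hence "card (proj (Cs (Suc i)) (insert x X)) = card (proj (Cs (Suc i)) X)"
        using proj_inj_transfer[OF sub[OF that(1,2)] fin(1)[OF i1(1)]] by blast
      hence "card A ^ r (Suc i) (insert x X) = card A ^ r (Suc i) X"
        using pw[OF i1(2) that(3)] pw[OF i1(2) X'] by simp
      hence "r (Suc i) (insert x X) = r (Suc i) X"
        using pow_le_exp[OF assms(2)] by (metis le_antisym order_refl)
      thus ?thesis using True by simp
    next
      case False
      thus ?thesis using incr[OF i1(1) that(3,4)] incr[OF i1(2) that(3,4)] by linarith
    qed
  qed
  have r0: "r i {} = 0" if "i \<in> {1..m}" for i
  proof -
    have "card A ^ r i {} = card (proj (Cs i) {})" using pw[OF that] by simp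
    also have "proj (Cs i) {} = {\<lambda>_. undefined}"
    proof -
      have "card (proj (Cs i) {}) = card A ^ r i {}" using pw[OF that] by simp
      hence "proj (Cs i) {} \<noteq> {}" using assms(2) by auto
      thus ?thesis unfolding proj_def by (auto simp: restrict_def image_iff)
    qed
    finally have "card A ^ r i {} = 1" by simp
    hence "card A ^ r i {} \<le> card A ^ 0" by (simp only: power_0)
    thus ?thesis using pow_le_exp[OF assms(2)] by blast
  qed
  show ?thesis
    unfolding demi_matroid_def
  proof (intro conjI allI impI ballI)
    fix X assume X: "X \<subseteq> {1..n}"
    show "0 \<le> flag_rho A m Cs X"
      unfolding rho using alt_sum_bounds[of m "\<lambda>i. int (r i X)"] rmono[OF _ _ X] by auto
  next
    show "flag_rho A m Cs {} = 0" unfolding rho using r0 by simp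
  next
    fix X x assume X: "X \<subseteq> {1..n}" and x: "x \<in> {1..n}"
    define S where "S = (\<Sum>i = 1..m. (-1) ^ (i + 1) * (int (r i (insert x X)) - int (r i X)))"
    define d where "d = int (r 1 (insert x X)) - int (r 1 X)"
    have S1: "0 \<le> S \<and> S \<le> max 0 d"
      unfolding S_def d_def
      apply (rule alt_sum_bounds)
      using dmono[OF _ _ X x] incr[OF _ X x] by auto
    have S2: "d \<le> 1 \<or> m = 0"
      unfolding d_def using incr[OF _ X x, of 1] by (cases "m = 0") auto
    have S3: "S = flag_rho A m Cs (insert x X) - flag_rho A m Cs X"
      unfolding rho S_def by (simp add: sum_subtractf[symmetric] algebra_simps)
    have H: "0 \<le> S \<and> S \<le> 1"
    proof (cases "m = 0")
      case True
      then show ?thesis unfolding S_def by simp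
    next
      case False
      then show ?thesis using S1 S2 by (auto simp: max_def split: if_splits)
    qed
    show "flag_rho A m Cs X \<le> flag_rho A m Cs (insert x X)"
      using H S3 by linarith
    show "flag_rho A m Cs (insert x X) \<le> flag_rho A m Cs X + 1"
      using H S3 by linarith
  qed
qed

end
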